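(* Let $\omega$ be a weight function and let $\mathcal M_\omega=(\mathbf W^{(\lambda)})_{\lambda>0}$, $W^{(\lambda)}_\alpha:=e^{\frac1\lambda\varphi^*_\omega(\lambda|\alpha|)}$ ($\lambda>0$, $\alpha\in\mathbb N_0^d$). Then $\mathcal S_{\{\mathcal M_\omega\}}=\mathcal S_{\{\omega\}}(\mathbb R^d)$ and $\mathcal S_{(\mathcal M_\omega)}=\mathcal S_{(\omega)}(\mathbb R^d)$, and these equalities are also topological.
   Context: A weight function is a continuous increasing function $\omega:[0,+\infty)\to[0,+\infty)$ such that: ($\alpha$) there is $L\ge1$ with $\omega(2t)\le L(\omega(t)+1)$ for all $t\ge0$; ($\beta$) $\omega(t)=O(t^2)$ as $t\to+\infty$; ($\gamma$) $\log t=o(\omega(t))$ as $t\to+\infty$; ($\delta$) $\varphi_\omega(t):=\omega(e^t)$ is convex on $[0,+\infty)$. Young conjugate: $\varphi_\omega^*(s):=\sup_{t\ge0}\{ts-\varphi_\omega(t)\}$. For a family $\mathcal M=(\mathbf M^{(\lambda)})_{\lambda>0}$ of positive sequences on $\mathbb N_0^d$ and $h>0$, $\|f\|_{\infty,\mathbf M^{(\lambda)},h}:=\sup_{\alpha,\beta\in\mathbb N_0^d}\frac{\|x^\alpha\partial^\beta f\|_\infty}{h^{|\alpha+\beta|}M^{(\lambda)}_{\alpha+\beta}}$; $\mathcal S_{\{\mathcal M\}}$ is the set of $f\in C^\infty(\mathbb R^d)$ with $\|f\|_{\infty,\mathbf M^{(\lambda)},h}<\infty$ for some $\lambda,h>0$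 (inductive limit topology) and $\mathcal S_{(\mathcal M)}$ the set with this finite for all $\lambda,h>0$ (projective limit topology). With $\|f\|_{\infty,\mathbf W^{(\lambda)}}:=\sup_{\alpha,\beta\in\mathbb N_0^d}\frac{\|x^\alpha\partial^\beta f\|_\infty}{W^{(\lambda)}_{\alpha+\beta}}$, $\mathcal S_{\{\omega\}}(\mathbb R^d)$ is the set of $f\in C^\infty(\mathbb R^d)$ with $\|f\|_{\infty,\mathbf W^{(\lambda)}}<\infty$ for some $\lambda>0$ (inductive limit topology), and $\mathcal S_{(\omega)}(\mathbb R^d)$ the set with $\|f\|_{\infty,\mathbf W^{(\lambda)}}<\infty$ for all $\lambda>0$ (projective limit topology). *)

theory Defs
  imports "HOL-Analysis.Analysis" "HOL-Library.Landau_Symbols"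
begin

definition weight_function :: "(real \<Rightarrow> real) \<Rightarrow> bool" where
  "weight_function \<omega> \<longleftrightarrow>
     continuous_on {0..} \<omega> \<and> mono_on {0..} \<omega> \<and> (\<forall>t\<ge>0. \<omega> t \<ge> 0) \<and>
     (\<exists>L\<ge>1. \<forall>t\<ge>0. \<omega> (2 * t) \<le> L * (\<omega> t + 1)) \<and>
     \<omega> \<in> O[at_top](\<lambda>t. t ^ 2) \<and>
     (\<lambda>t. ln t) \<in> o[at_top](\<omega>) \<and>
     convex_on {0..} (\<lambda>t. \<omega> (exp t))"

definition phi_star :: "(real \<Rightarrow> real) \<Rightarrow> real \<Rightarrow> real" where
  "phi_star \<omega> s = Sup {t * s - \<omega> (exp t) | t. t \<ge> 0}"

type_synonym 'd mindex = "'d \<Rightarrow> nat"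

definition mlen :: "'d::finite mindex \<Rightarrow> nat" where
  "mlen \<alpha> = (\<Sum>i\<in>UNIV. \<alpha> i)"

definition monom :: "'d::finite mindex \<Rightarrow> real^'d \<Rightarrow> real" where
  "monom \<alpha> x = (\<Prod>i\<in>UNIV. (x $ i) ^ \<alpha> i)"

definition partial :: "'d::finite \<Rightarrow> (real^'d \<Rightarrow> complex) \<Rightarrow> real^'d \<Rightarrow> complex" where
  "partial i f = (\<lambda>x. vector_derivative (\<lambda>t. f (x + t *\<^sub>R axis i 1)) (at 0))"

fun partials :: "'d::finite list \<Rightarrow> (real^'d \<Rightarrow> complex) \<Rightarrow> real^'d \<Rightarrow> complex" where
  "partials [] f = f"
| "partials (i # is) f = partial i (partials is f)"

text \<open>\<open>\<partial>^\<beta>\<close>: iterated partial derivatives in any order containing each direction \<open>i\<close>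
  exactly \<open>\<beta> i\<close> times (the order is irrelevant for smooth functions).\<close>
definition dpart :: "'d::finite mindex \<Rightarrow> (real^'d \<Rightarrow> complex) \<Rightarrow> real^'d \<Rightarrow> complex" where
  "dpart \<beta> f = partials (SOME ds. \<forall>i. count_list ds i = \<beta> i) f"

definition smooth :: "(real^'d::finite \<Rightarrow> complex) \<Rightarrow> bool" where
  "smooth f \<longleftrightarrow> (\<forall>ds x. partials ds f differentiable (at x))"

definition wnorm :: "('d::finite mindex \<Rightarrow> real) \<Rightarrow> (real^'d \<Rightarrow> complex) \<Rightarrow> ennreal" where
  "wnorm M f = (SUP \<alpha>. SUP \<beta>. SUP x.
      ennreal (cmod (of_real (monom \<alpha> x) * dpart \<beta> f x) / M (\<lambda>i. \<alpha> i + \<beta> i)))"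

definition wnorm_h :: "('d::finite mindex \<Rightarrow> real) \<Rightarrow> real \<Rightarrow> (real^'d \<Rightarrow> complex) \<Rightarrow> ennreal" where
  "wnorm_h M h f = wnorm (\<lambda>\<gamma>. h ^ mlen \<gamma> * M \<gamma>) f"

definition Wseq :: "(real \<Rightarrow> real) \<Rightarrow> real \<Rightarrow> 'd::finite mindex \<Rightarrow> real" where
  "Wseq \<omega> lam \<alpha> = exp ((1 / lam) * phi_star \<omega> (lam * real (mlen \<alpha>)))"

definition abs_convex :: "(real^'d::finite \<Rightarrow> complex) set \<Rightarrow> bool" where
  "abs_convex V \<longleftrightarrow> (\<forall>f\<in>V. \<forall>g\<in>V. \<forall>a b::complex. cmod a + cmod b \<le> 1 \<longrightarrow>
       (\<lambda>x. a * f x + b * g x) \<in> V)"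

definition roum_space :: "'i set \<Rightarrow> ('i \<Rightarrow> (real^'d::finite \<Rightarrow> complex) \<Rightarrow> ennreal)
    \<Rightarrow> (real^'d \<Rightarrow> complex) set" where
  "roum_space I p = {f. smooth f \<and> (\<exists>i\<in>I. p i f < \<infinity>)}"

definition beur_space :: "'i set \<Rightarrow> ('i \<Rightarrow> (real^'d::finite \<Rightarrow> complex) \<Rightarrow> ennreal)
    \<Rightarrow> (real^'d \<Rightarrow> complex) set" where
  "beur_space I p = {f. smooth f \<and> (\<forall>i\<in>I. p i f < \<infinity>)}"

text \<open>Locally convex inductive limit of the normed spaces \<open>E_i = {f. p i f < \<infinity>}\<close>:
  0-neighbourhood base = absolutely convex \<open>V\<close> such that \<open>V \<inter> E_i\<close> is a 0-neighbourhood
  in every \<open>E_i\<close>.\<close>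
definition ind_topology :: "'i set \<Rightarrow> ('i \<Rightarrow> (real^'d::finite \<Rightarrow> complex) \<Rightarrow> ennreal)
    \<Rightarrow> (real^'d \<Rightarrow> complex) topology" where
  "ind_topology I p = topology (\<lambda>U. U \<subseteq> roum_space I p \<and>
     (\<forall>f\<in>U. \<exists>V. V \<subseteq> roum_space I p \<and> abs_convex V \<and>
        (\<forall>i\<in>I. \<exists>\<epsilon>>0. {g\<in>roum_space I p. p i g < ennreal \<epsilon>} \<subseteq> V) \<and>
        (\<lambda>g x. f x + g x) ` V \<subseteq> U))"

definition proj_topology :: "'i set \<Rightarrow> ('i \<Rightarrow> (real^'d::finite \<Rightarrow> complex) \<Rightarrow> ennreal)
    \<Rightarrow> (real^'d \<Rightarrow> complex) topology" where
  "proj_topology I p = topology (\<lambda>U. U \<subseteq> beur_space I p \<and>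
     (\<forall>f\<in>U. \<exists>F \<epsilon>. finite F \<and> F \<subseteq> I \<and> \<epsilon> > 0 \<and>
        {g\<in>beur_space I p. \<forall>i\<in>F. p i (\<lambda>x. g x - f x) < ennreal \<epsilon>} \<subseteq> U))"

definition Mw_norms :: "(real \<Rightarrow> real) \<Rightarrow> real \<times> real \<Rightarrow> (real^'d::finite \<Rightarrow> complex) \<Rightarrow> ennreal" where
  "Mw_norms \<omega> = (\<lambda>(lam, h). wnorm_h (Wseq \<omega> lam) h)"

definition omega_norms :: "(real \<Rightarrow> real) \<Rightarrow> real \<Rightarrow> (real^'d::finite \<Rightarrow> complex) \<Rightarrow> ennreal" where
  "omega_norms \<omega> = (\<lambda>lam. wnorm (Wseq \<omega> lam))"

end

theory Submission
  imports Defs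
begin

lemma phi_bdd:
  assumes wf: "weight_function \<omega>"
  shows "bdd_above {t * s - \<omega> (exp t) | t. t \<ge> 0}"
proof -
  have nn: "\<And>t. t \<ge> 0 \<Longrightarrow> \<omega> t \<ge> 0" using wf unfolding weight_function_def by auto
  have lo: "(\<lambda>t. ln t) \<in> o[at_top](\<omega>)" using wf unfolding weight_function_def by auto
  define c where "c = 1 / (\<bar>s\<bar> + 1)"
  have cpos: "c > 0" unfolding c_def by simp
  from landau_o.smallD[OF lo cpos] have "eventually (\<lambda>x. norm (ln x) \<le> c * norm (\<omega> x)) at_top" .
  then obtain X where X: "\<And>x. x \<ge> X \<Longrightarrow> norm (ln x) \<le> c * norm (\<omega> x)"
    by (auto simp: eventually_at_top_linorder)
  define T where "T = max 0 (ln (max X 1))"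
  show ?thesis
  proof (rule bdd_aboveI[where M = "T * \<bar>s\<bar>"])
    fix y assume "y \<in> {t * s - \<omega> (exp t) | t. t \<ge> 0}"
    then obtain t where t: "t \<ge> 0" "y = t * s - \<omega> (exp t)" by auto
    have w: "\<omega> (exp t) \<ge> 0" using nn by simp
    show "y \<le> T * \<bar>s\<bar>"
    proof (cases "t \<le> T")
      case True
      have "t * s \<le> t * \<bar>s\<bar>" using t by (simp add: mult_left_mono)
      also have "\<dots> \<le> T * \<bar>s\<bar>" using True by (simp add: mult_right_mono)
      finally show ?thesis using t w by linarith
    next
      case False
      then have "t > ln (max X 1)" unfolding T_def by auto
      then have "exp t > max X 1"
        by (metis exp_less_cancel_iff exp_ln max.strict_coboundedI2 zero_less_one)
      then have "exp t \<ge> X" by simp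
      from X[OF this] have "t \<le> c * \<omega> (exp t)" using w by simp
      then have "t * (\<bar>s\<bar> + 1) \<le> \<omega> (exp t)" unfolding c_def
        by (simp add: field_simps)
      moreover have "t * s \<le> t * \<bar>s\<bar>" using t by (simp add: mult_left_mono)
      moreover have "0 \<le> T * \<bar>s\<bar>" unfolding T_def by simp
      ultimately show ?thesis using t by (simp add: algebra_simps)
    qed
  qed
qed

lemma phi_star_upper:
  assumes "weight_function \<omega>" "t \<ge> 0"
  shows "t * s - \<omega> (exp t) \<le> phi_star \<omega> s"
  unfolding phi_star_def
  by (rule cSup_upper) (use assms phi_bdd[OF assms(1)] in auto)

lemma phi_star_least:
  assumes "\<And>t. t \<ge> 0 \<Longrightarrow> t * s - \<omega> (exp t) \<le> B"
  shows "phi_star \<omega> s \<le> B"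
  unfolding phi_star_def
  by (rule cSup_least) (use assms in auto)

lemma phi_step:
  assumes wf: "weight_function \<omega>" and L: "L \<ge> 1" "\<forall>t\<ge>0. \<omega> (2 * t) \<le> L * (\<omega> t + 1)"
    and mu: "\<mu> > 0" and j: "j \<ge> 0"
  shows "(1 / (L * \<mu>)) * phi_star \<omega> ((L * \<mu>) * j) \<ge> j * ln 2 + (1 / \<mu>) * phi_star \<omega> (\<mu> * j) - 1 / \<mu>"
proof -
  define P where "P = phi_star \<omega> ((L * \<mu>) * j)"
  have "phi_star \<omega> (\<mu> * j) \<le> P / L - ln 2 * \<mu> * j + 1"
  proof (rule phi_star_least)
    fix t :: real assume t: "t \<ge> 0"
    have "(t + ln 2) * ((L * \<mu>) * j) - \<omega> (exp (t + ln 2)) \<le> P"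
      unfolding P_def by (rule phi_star_upper[OF wf]) (use t in auto)
    moreover have "exp (t + ln 2) = 2 * exp t" by (simp add: exp_add)
    moreover have "\<omega> (2 * exp t) \<le> L * (\<omega> (exp t) + 1)" using L(2) by simp
    ultimately have "(t + ln 2) * ((L * \<mu>) * j) - L * (\<omega> (exp t) + 1) \<le> P" by simp
    then have "L * ((t + ln 2) * \<mu> * j - \<omega> (exp t) - 1) \<le> P" by (simp add: algebra_simps)
    then have "(t + ln 2) * \<mu> * j - \<omega> (exp t) - 1 \<le> P / L" using L(1)
      by (simp add: field_simps)
    then show "t * (\<mu> * j) - \<omega> (exp (t)) \<le> P / L - ln 2 * \<mu> * j + 1"
      by (simp add: algebra_simps)
  qed
  then have "(1 / \<mu>) * phi_star \<omega> (\<mu> * j) \<le> (1/\<mu>) * (P / L - ln 2 * \<mu> * j + 1)"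
    using mu by (simp add: divide_right_mono)
  also have "\<dots> = (1 / (L * \<mu>)) * P - j * ln 2 + 1 / \<mu>" using mu L(1) by (simp add: field_simps)
  finally show ?thesis unfolding P_def by simp
qed

lemma phi_iter:
  assumes wf: "weight_function \<omega>" and L: "L \<ge> 1" "\<forall>t\<ge>0. \<omega> (2 * t) \<le> L * (\<omega> t + 1)"
  shows "\<mu> > 0 \<Longrightarrow> \<exists>K. \<forall>j\<ge>0. (1 / (L^n * \<mu>)) * phi_star \<omega> ((L^n * \<mu>) * j)
            \<ge> real n * j * ln 2 + (1 / \<mu>) * phi_star \<omega> (\<mu> * j) - K"
proof (induction n arbitrary: \<mu>)
  case 0
  show ?case by (rule exI[of _ 0]) simp
next
  case (Suc n)
  have Lmu: "L * \<mu> > 0" using Suc.prems L(1) by simp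
  from Suc.IH[OF Lmu] obtain K where K: "\<And>j. j \<ge> 0 \<Longrightarrow> (1 / (L^n * (L * \<mu>))) * phi_star \<omega> ((L^n * (L * \<mu>)) * j)
            \<ge> real n * j * ln 2 + (1 / (L * \<mu>)) * phi_star \<omega> ((L * \<mu>) * j) - K" by blast
  show ?case
  proof (intro exI[of _ "K + 1 / \<mu>"] allI impI)
    fix j :: real assume j: "j \<ge> 0"
    have e: "L ^ Suc n * \<mu> = L^n * (L * \<mu>)" by (simp add: algebra_simps)
    have "(1 / (L * \<mu>)) * phi_star \<omega> ((L * \<mu>) * j) \<ge> j * ln 2 + (1 / \<mu>) * phi_star \<omega> (\<mu> * j) - 1 / \<mu>"
      by (rule phi_step[OF wf L Suc.prems j])
    with K[OF j] show "(1 / (L ^ Suc n * \<mu>)) * phi_star \<omega> ((L ^ Suc n * \<mu>) * j)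
            \<ge> real (Suc n) * j * ln 2 + (1 / \<mu>) * phi_star \<omega> (\<mu> * j) - (K + 1 / \<mu>)"
      unfolding e by (simp add: algebra_simps)
  qed
qed

lemma W_comp:
  assumes wf: "weight_function \<omega>" and L: "L \<ge> 1" "\<forall>t\<ge>0. \<omega> (2 * t) \<le> L * (\<omega> t + 1)"
    and mu: "\<mu> > 0"
  shows "\<exists>K. \<forall>\<gamma>. exp (-K) * 2 ^ (n * mlen \<gamma>) * Wseq \<omega> \<mu> \<gamma> \<le> Wseq \<omega> (L^n * \<mu>) (\<gamma>::'d::finite mindex)"
proof -
  from phi_iter[OF wf L mu, of n] obtain K where K: "\<And>j. j \<ge> 0 \<Longrightarrow> (1 / (L^n * \<mu>)) * phi_star \<omega> ((L^n * \<mu>) * j)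
            \<ge> real n * j * ln 2 + (1 / \<mu>) * phi_star \<omega> (\<mu> * j) - K" by blast
  show ?thesis
  proof (intro exI[of _ K] allI)
    fix \<gamma> :: "'d mindex"
    define j where "j = real (mlen \<gamma>)"
    have j0: "j \<ge> 0" unfolding j_def by simp
    have "exp (real n * j * ln 2 + (1 / \<mu>) * phi_star \<omega> (\<mu> * j) - K) \<le> Wseq \<omega> (L^n * \<mu>) \<gamma>"
      unfolding Wseq_def j_def[symmetric] using K[OF j0] by simp
    moreover have "exp (real n * j * ln 2 + (1 / \<mu>) * phi_star \<omega> (\<mu> * j) - K)
        = exp (-K) * exp (real (n * mlen \<gamma>) * ln 2) * Wseq \<omega> \<mu> \<gamma>"
      unfolding Wseq_def j_def by (simp add: exp_add exp_diff algebra_simps exp_minus field_simps)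
    moreover have "exp (real (n * mlen \<gamma>) * ln 2) = 2 ^ (n * mlen \<gamma>)"
      by (metis exp_ln_iff exp_of_nat_mult zero_less_numeral exp_ln)
    ultimately show "exp (-K) * 2 ^ (n * mlen \<gamma>) * Wseq \<omega> \<mu> \<gamma> \<le> Wseq \<omega> (L^n * \<mu>) \<gamma>" by simp
  qed
qed

lemma wnorm_mono:
  assumes A: "\<And>\<gamma>. 0 < A \<gamma>" and AB: "\<And>\<gamma>. A \<gamma> \<le> C * B \<gamma>" and C: "C > 0"
  shows "wnorm B f \<le> ennreal C * wnorm A f"
  unfolding wnorm_def
proof (intro SUP_least)
  fix a b x
  define v where "v = cmod (of_real (monom a x) * dpart b f x)"
  define g where "g = (\<lambda>i. a i + b i)"
  have v0: "v \<ge> 0" unfolding v_def by simp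
  have Ag: "0 < A g" by (rule A)
  have Bg: "0 < B g" proof -
    have "0 < C * B g" using Ag AB[of g] by linarith
    then show ?thesis using C by (simp add: zero_less_mult_iff)
  qed
  have "v / B g \<le> C * (v / A g)"
  proof -
    have "v * A g \<le> v * (C * B g)" using AB[of g] v0 by (simp add: mult_left_mono)
    then show ?thesis using Ag Bg by (simp add: field_simps)
  qed
  then have "ennreal (v / B g) \<le> ennreal C * ennreal (v / A g)"
    using C v0 Ag by (simp add: ennreal_mult[symmetric])
  also have "ennreal (v / A g) \<le> (SUP a. SUP b. SUP x. ennreal (cmod (of_real (monom a x) * dpart b f x) / A (\<lambda>i. a i + b i)))"
    unfolding v_def g_def
    by (rule SUP_upper2[of a], simp, rule SUP_upper2[of b], simp, rule SUP_upper2[of x], simp, simp)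
  then have "ennreal C * ennreal (v / A g) \<le> ennreal C * (SUP a. SUP b. SUP x. ennreal (cmod (of_real (monom a x) * dpart b f x) / A (\<lambda>i. a i + b i)))"
    by (rule mult_left_mono) simp
  finally show "ennreal (cmod (of_real (monom a x) * dpart b f x) / B (\<lambda>i. a i + b i))
         \<le> ennreal C * (SUP a. SUP b. SUP x. ennreal (cmod (of_real (monom a x) * dpart b f x) / A (\<lambda>i. a i + b i)))"
    unfolding v_def g_def by simp
qed

lemma ennreal_cmult_less:
  assumes "0 < C" "x < ennreal e"
  shows "ennreal C * x < ennreal (C * e)"
proof -
  from assms(2) obtain r where r: "x = ennreal r" "0 \<le> r" "r < e"
    by (metis ennreal_cases ennreal_less_iff less_ennreal.rep_eq not_less_iff_gr_or_eq top.extremum_strict enn2real_nonneg)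
  then show ?thesis using assms(1) by (simp add: ennreal_mult[symmetric] ennreal_less_iff)
qed

lemma roum_sub:
  assumes "\<And>i. i \<in> I \<Longrightarrow> \<exists>j\<in>J. \<exists>C>0. \<forall>g. q j g \<le> ennreal C * p i g"
  shows "roum_space I p \<subseteq> roum_space J q"
proof
  fix f assume "f \<in> roum_space I p"
  then obtain i where i: "i \<in> I" "p i f < \<infinity>" "smooth f" unfolding roum_space_def by auto
  from assms[OF i(1)] obtain j C where jC: "j \<in> J" "C > 0" "q j f \<le> ennreal C * p i f" by auto
  moreover have "ennreal C * p i f < \<infinity>" using i(2) by (simp add: ennreal_mult_less_top)
  ultimately have "q j f < \<infinity>" by (meson le_less_trans)
  then show "f \<in> roum_space J q" using i jC(1) unfolding roum_space_def by auto
qed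

lemma beur_sub:
  assumes "\<And>j. j \<in> J \<Longrightarrow> \<exists>i\<in>I. \<exists>C>0. \<forall>g. q j g \<le> ennreal C * p i g"
  shows "beur_space I p \<subseteq> beur_space J q"
proof
  fix f assume f: "f \<in> beur_space I p"
  show "f \<in> beur_space J q" unfolding beur_space_def
  proof (intro CollectI conjI ballI)
    show "smooth f" using f unfolding beur_space_def by auto
    fix j assume "j \<in> J"
    from assms[OF this] obtain i C where iC: "i \<in> I" "C > 0" "q j f \<le> ennreal C * p i f" by auto
    have "p i f < \<infinity>" using f iC(1) unfolding beur_space_def by auto
    then have "ennreal C * p i f < \<infinity>" by (simp add: ennreal_mult_less_top)
    then show "q j f < \<infinity>" using iC(3) by (meson le_less_trans)
  qed
qed

lemma ind_cond:
  assumes "\<And>i. i \<in> I \<Longrightarrow> \<exists>j\<in>J. \<exists>C>0. \<forall>g. q j g \<le> ennreal C * p i g"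
     and "\<forall>j\<in>J. \<exists>\<epsilon>>0. {g\<in>R. q j g < ennreal \<epsilon>} \<subseteq> V"
  shows "\<forall>i\<in>I. \<exists>\<epsilon>>0. {g\<in>R. p i g < ennreal \<epsilon>} \<subseteq> V"
proof
  fix i assume "i \<in> I"
  from assms(1)[OF this] obtain j C where jC: "j \<in> J" "C > 0" "\<And>g. q j g \<le> ennreal C * p i g" by auto
  from assms(2) jC(1) obtain \<epsilon> where e: "\<epsilon> > 0" "{g\<in>R. q j g < ennreal \<epsilon>} \<subseteq> V" by auto
  show "\<exists>\<epsilon>>0. {g\<in>R. p i g < ennreal \<epsilon>} \<subseteq> V"
  proof (intro exI[of _ "\<epsilon> / C"] conjI)
    show "\<epsilon> / C > 0" using e jC by simp
    show "{g\<in>R. p i g < ennreal (\<epsilon> / C)} \<subseteq> V"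
    proof
      fix g assume g: "g \<in> {g\<in>R. p i g < ennreal (\<epsilon> / C)}"
      then have "ennreal C * p i g < ennreal (C * (\<epsilon> / C))" using g by (intro ennreal_cmult_less[OF jC(2)]) auto
      moreover have "C * (\<epsilon> / C) = \<epsilon>" using jC(2) by simp
      ultimately have "ennreal C * p i g < ennreal \<epsilon>" by simp
      then have "q j g < ennreal \<epsilon>" using jC(3)[of g] by (meson le_less_trans)
      then show "g \<in> V" using g e(2) by auto
    qed
  qed
qed

lemma proj_cond:
  assumes H: "\<And>j. j \<in> J \<Longrightarrow> \<exists>i\<in>I. \<exists>C>0. \<forall>g. q j g \<le> ennreal C * p i g"
  and G: "finite G" "G \<subseteq> J" and d: "\<delta> > 0"
  and U: "{g\<in>B. \<forall>j\<in>G. q j (\<lambda>x. g x - f x) < ennreal \<delta>} \<subseteq> U"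
  shows "\<exists>F \<epsilon>. finite F \<and> F \<subseteq> I \<and> \<epsilon> > 0 \<and> {g\<in>B. \<forall>i\<in>F. p i (\<lambda>x. g x - f x) < ennreal \<epsilon>} \<subseteq> U"
proof -
  have "\<forall>j\<in>G. \<exists>i. i \<in> I \<and> (\<exists>C>0. \<forall>g. q j g \<le> ennreal C * p i g)" using H G by blast
  then obtain ii where ii: "\<And>j. j \<in> G \<Longrightarrow> ii j \<in> I \<and> (\<exists>C>0. \<forall>g. q j g \<le> ennreal C * p (ii j) g)"
    by metis
  then obtain CC where CC: "\<And>j. j \<in> G \<Longrightarrow> CC j > 0 \<and> (\<forall>g. q j g \<le> ennreal (CC j) * p (ii j) g)"
    by metis
  define S where "S = sum CC G"
  have S0: "S \<ge> 0" unfolding S_def using CC by (simp add: less_imp_le sum_nonneg)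
  define \<epsilon> where "\<epsilon> = \<delta> / (1 + S)"
  have e0: "\<epsilon> > 0" unfolding \<epsilon>_def using S0 d by simp
  show ?thesis
  proof (intro exI[of _ "ii ` G"] exI[of _ \<epsilon>] conjI)
    show "finite (ii ` G)" using G by simp
    show "ii ` G \<subseteq> I" using ii by auto
    show "\<epsilon> > 0" by (rule e0)
    show "{g\<in>B. \<forall>i\<in>ii ` G. p i (\<lambda>x. g x - f x) < ennreal \<epsilon>} \<subseteq> U"
    proof
      fix g assume g: "g \<in> {g\<in>B. \<forall>i\<in>ii ` G. p i (\<lambda>x. g x - f x) < ennreal \<epsilon>}"
      have "\<forall>j\<in>G. q j (\<lambda>x. g x - f x) < ennreal \<delta>"
      proof
        fix j assume j: "j \<in> G"
        have Cj: "CC j > 0" using CC[OF j] by simp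
        have "CC j \<le> S" unfolding S_def using G(1) j CC by (intro member_le_sum) (auto intro: less_imp_le)
        then have "CC j * \<delta> \<le> (1 + S) * \<delta>" using d by (intro mult_right_mono) auto
        then have le: "CC j * \<epsilon> \<le> \<delta>" unfolding \<epsilon>_def using S0 d Cj
          by (simp add: field_simps)
        have "p (ii j) (\<lambda>x. g x - f x) < ennreal \<epsilon>" using g j by auto
        then have "ennreal (CC j) * p (ii j) (\<lambda>x. g x - f x) < ennreal (CC j * \<epsilon>)"
          by (rule ennreal_cmult_less[OF Cj])
        also have "\<dots> \<le> ennreal \<delta>" using le by (rule ennreal_leI)
        finally show "q j (\<lambda>x. g x - f x) < ennreal \<delta>" using CC[OF j] by (meson le_less_trans)
      qed
      then show "g \<in> U" using g U by auto
    qed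
  qed
qed

lemma Wseq_pos: "Wseq \<omega> lam \<gamma> > 0"
  unfolding Wseq_def by simp

lemma getL:
  assumes "weight_function \<omega>"
  obtains L where "L \<ge> 1" "\<forall>t\<ge>0. \<omega> (2 * t) \<le> L * (\<omega> t + 1)"
  using assms unfolding weight_function_def by blast

lemma F1:
  assumes wf: "weight_function \<omega>" and lh: "lam > 0" "h > 0"
  shows "\<exists>\<kappa>\<in>{0<..}. \<exists>C>0. \<forall>g::real^'d::finite \<Rightarrow> complex.
           omega_norms \<omega> \<kappa> g \<le> ennreal C * Mw_norms \<omega> (lam, h) g"
proof -
  obtain L where L: "L \<ge> 1" "\<forall>t\<ge>0. \<omega> (2 * t) \<le> L * (\<omega> t + 1)" using getL[OF wf] by blast
  obtain n where n: "h < 2 ^ n" using real_arch_pow[of 2 h] by auto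
  obtain K where K: "\<And>\<gamma>::'d mindex. exp (-K) * 2 ^ (n * mlen \<gamma>) * Wseq \<omega> lam \<gamma> \<le> Wseq \<omega> (L^n * lam) \<gamma>"
    using W_comp[OF wf L lh(1), of n] by blast
  have kpos: "L^n * lam > 0" using L(1) lh by simp
  show ?thesis
  proof (intro bexI[of _ "L^n * lam"] exI[of _ "exp K"] conjI allI)
    fix g :: "real^'d \<Rightarrow> complex"
    show "omega_norms \<omega> (L ^ n * lam) g \<le> ennreal (exp K) * Mw_norms \<omega> (lam, h) g"
      unfolding omega_norms_def Mw_norms_def wnorm_h_def split
    proof (rule wnorm_mono)
      fix \<gamma> :: "'d mindex"
      show "0 < h ^ mlen \<gamma> * Wseq \<omega> lam \<gamma>" using lh Wseq_pos[of \<omega> lam \<gamma>] by simp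
      have "h ^ mlen \<gamma> \<le> (2 ^ n) ^ mlen \<gamma>" using lh n by (intro power_mono) auto
      then have "h ^ mlen \<gamma> * Wseq \<omega> lam \<gamma> \<le> 2 ^ (n * mlen \<gamma>) * Wseq \<omega> lam \<gamma>"
        using Wseq_pos[of \<omega> lam \<gamma>] by (simp add: power_mult mult_right_mono)
      also have "\<dots> = exp K * (exp (-K) * 2 ^ (n * mlen \<gamma>) * Wseq \<omega> lam \<gamma>)"
        by (simp add: exp_minus field_simps)
      also have "\<dots> \<le> exp K * Wseq \<omega> (L ^ n * lam) \<gamma>" using K[of \<gamma>] by simp
      finally show "h ^ mlen \<gamma> * Wseq \<omega> lam \<gamma> \<le> exp K * Wseq \<omega> (L ^ n * lam) \<gamma>" .
    qed simp
  qed (use kpos in auto)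
qed

lemma F2:
  assumes wf: "weight_function \<omega>" and lh: "lam > 0" "h > 0"
  shows "\<exists>\<kappa>\<in>{0<..}. \<exists>C>0. \<forall>g::real^'d::finite \<Rightarrow> complex.
           Mw_norms \<omega> (lam, h) g \<le> ennreal C * omega_norms \<omega> \<kappa> g"
proof -
  obtain L where L: "L \<ge> 1" "\<forall>t\<ge>0. \<omega> (2 * t) \<le> L * (\<omega> t + 1)" using getL[OF wf] by blast
  obtain n where n: "1 / h < 2 ^ n" using real_arch_pow[of 2 "1/h"] by auto
  define \<kappa> where "\<kappa> = lam / L^n"
  have kpos: "\<kappa> > 0" using L(1) lh unfolding \<kappa>_def by simp
  have kl: "L^n * \<kappa> = lam" unfolding \<kappa>_def using L(1) by simp
  obtain K where K: "\<And>\<gamma>::'d mindex. exp (-K) * 2 ^ (n * mlen \<gamma>) * Wseq \<omega> \<kappa> \<gamma> \<le> Wseq \<omega> lam \<gamma>"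
    using W_comp[OF wf L kpos, of n] unfolding kl by blast
  have h2: "1 \<le> h * 2 ^ n" using n lh by (simp add: field_simps)
  show ?thesis
  proof (intro bexI[of _ \<kappa>] exI[of _ "exp K"] conjI allI)
    fix g :: "real^'d \<Rightarrow> complex"
    show "Mw_norms \<omega> (lam, h) g \<le> ennreal (exp K) * omega_norms \<omega> \<kappa> g"
      unfolding omega_norms_def Mw_norms_def wnorm_h_def split
    proof (rule wnorm_mono)
      fix \<gamma> :: "'d mindex"
      show "0 < Wseq \<omega> \<kappa> \<gamma>" by (rule Wseq_pos)
      have "1 \<le> (h * 2 ^ n) ^ mlen \<gamma>" using h2 by (rule one_le_power)
      then have "Wseq \<omega> \<kappa> \<gamma> \<le> (h * 2 ^ n) ^ mlen \<gamma> * Wseq \<omega> \<kappa> \<gamma>"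
        using Wseq_pos[of \<omega> \<kappa> \<gamma>] by simp
      also have "\<dots> = h ^ mlen \<gamma> * exp K * (exp (-K) * 2 ^ (n * mlen \<gamma>) * Wseq \<omega> \<kappa> \<gamma>)"
        by (simp add: exp_minus field_simps power_mult power_mult_distrib)
      also have "\<dots> \<le> h ^ mlen \<gamma> * exp K * Wseq \<omega> lam \<gamma>" using K[of \<gamma>] lh by (intro mult_left_mono) auto
      finally show "Wseq \<omega> \<kappa> \<gamma> \<le> exp K * (h ^ mlen \<gamma> * Wseq \<omega> lam \<gamma>)" by (simp add: algebra_simps)
    qed simp
  qed (use kpos in auto)
qed

lemma F3: "Mw_norms \<omega> (lam, 1) = omega_norms \<omega> lam"
  unfolding Mw_norms_def omega_norms_def wnorm_h_def by simp

theorem proposition6p3: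
  assumes "weight_function \<omega>"
  shows "roum_space ({0<..} \<times> {0<..}) (Mw_norms \<omega> :: real \<times> real \<Rightarrow> (real^'d::finite \<Rightarrow> complex) \<Rightarrow> ennreal)
           = roum_space {0<..} (omega_norms \<omega>)
       \<and> ind_topology ({0<..} \<times> {0<..}) (Mw_norms \<omega> :: real \<times> real \<Rightarrow> (real^'d::finite \<Rightarrow> complex) \<Rightarrow> ennreal)
           = ind_topology {0<..} (omega_norms \<omega>)
       \<and> beur_space ({0<..} \<times> {0<..}) (Mw_norms \<omega> :: real \<times> real \<Rightarrow> (real^'d::finite \<Rightarrow> complex) \<Rightarrow> ennreal)
           = beur_space {0<..} (omega_norms \<omega>)
       \<and> proj_topology ({0<..} \<times> {0<..}) (Mw_norms \<omega> :: real \<times> real \<Rightarrow> (real^'d::finite \<Rightarrow> complex) \<Rightarrow> ennreal)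
           = proj_topology {0<..} (omega_norms \<omega>)"
proof -
  define I2 :: "(real \<times> real) set" where "I2 = {0<..} \<times> {0<..}"
  define I1 :: "real set" where "I1 = {0<..}"
  define pM :: "real \<times> real \<Rightarrow> (real^'d::finite \<Rightarrow> complex) \<Rightarrow> ennreal" where "pM = Mw_norms \<omega>"
  define pO :: "real \<Rightarrow> (real^'d::finite \<Rightarrow> complex) \<Rightarrow> ennreal" where "pO = omega_norms \<omega>"
  have H1: "\<And>i. i \<in> I2 \<Longrightarrow> \<exists>j\<in>I1. \<exists>C>0. \<forall>g. pO j g \<le> ennreal C * pM i g"
    unfolding I1_def I2_def pO_def pM_def using F1[OF assms] by auto
  have H2: "\<And>i. i \<in> I2 \<Longrightarrow> \<exists>j\<in>I1. \<exists>C>0. \<forall>g. pM i g \<le> ennreal C * pO j g"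
    unfolding I1_def I2_def pO_def pM_def using F2[OF assms] by auto
  have H3: "\<And>j. j \<in> I1 \<Longrightarrow> \<exists>i\<in>I2. \<exists>C>0. \<forall>g. pM i g \<le> ennreal C * pO j g"
  proof -
    fix j assume "j \<in> I1"
    then show "\<exists>i\<in>I2. \<exists>C>0. \<forall>g. pM i g \<le> ennreal C * pO j g"
      unfolding I1_def I2_def pO_def pM_def
      by (intro bexI[of _ "(j, 1)"] exI[of _ 1]) (auto simp: F3)
  qed
  have H4: "\<And>j. j \<in> I1 \<Longrightarrow> \<exists>i\<in>I2. \<exists>C>0. \<forall>g. pO j g \<le> ennreal C * pM i g"
  proof -
    fix j assume "j \<in> I1"
    then show "\<exists>i\<in>I2. \<exists>C>0. \<forall>g. pO j g \<le> ennreal C * pM i g"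
      unfolding I1_def I2_def pO_def pM_def
      by (intro bexI[of _ "(j, 1)"] exI[of _ 1]) (auto simp: F3)
  qed
  have R: "roum_space I2 pM = roum_space I1 pO"
    using roum_sub[of I2 I1 pO pM, OF H1] roum_sub[of I1 I2 pM pO, OF H3] by blast
  have B: "beur_space I2 pM = beur_space I1 pO"
    using beur_sub[of I1 I2 pO pM, OF H4] beur_sub[of I2 I1 pM pO, OF H2] by blast
  have ceq: "(\<forall>i\<in>I2. \<exists>\<epsilon>>0. {g\<in>roum_space I1 pO. pM i g < ennreal \<epsilon>} \<subseteq> V)
        = (\<forall>i\<in>I1. \<exists>\<epsilon>>0. {g\<in>roum_space I1 pO. pO i g < ennreal \<epsilon>} \<subseteq> V)" for V
    using ind_cond[of I2 I1 pO pM, OF H1] ind_cond[of I1 I2 pM pO, OF H3] by blast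
  have IT: "ind_topology I2 pM = ind_topology I1 pO"
    unfolding ind_topology_def R by (simp only: ceq)
  have peq: "(\<exists>F \<epsilon>. finite F \<and> F \<subseteq> I2 \<and> \<epsilon> > 0 \<and>
        {g\<in>beur_space I1 pO. \<forall>i\<in>F. pM i (\<lambda>x. g x - f x) < ennreal \<epsilon>} \<subseteq> U)
     = (\<exists>F \<epsilon>. finite F \<and> F \<subseteq> I1 \<and> \<epsilon> > 0 \<and>
        {g\<in>beur_space I1 pO. \<forall>i\<in>F. pO i (\<lambda>x. g x - f x) < ennreal \<epsilon>} \<subseteq> U)" for f U
  proof
    assume "\<exists>F \<epsilon>. finite F \<and> F \<subseteq> I2 \<and> \<epsilon> > 0 \<and>
        {g\<in>beur_space I1 pO. \<forall>i\<in>F. pM i (\<lambda>x. g x - f x) < ennreal \<epsilon>} \<subseteq> U"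
    then obtain F \<epsilon> where "finite F" "F \<subseteq> I2" "\<epsilon> > 0"
        "{g\<in>beur_space I1 pO. \<forall>i\<in>F. pM i (\<lambda>x. g x - f x) < ennreal \<epsilon>} \<subseteq> U" by blast
    from proj_cond[of I2 I1 pM pO, OF H2 this] show "\<exists>F \<epsilon>. finite F \<and> F \<subseteq> I1 \<and> \<epsilon> > 0 \<and>
        {g\<in>beur_space I1 pO. \<forall>i\<in>F. pO i (\<lambda>x. g x - f x) < ennreal \<epsilon>} \<subseteq> U" .
  next
    assume "\<exists>F \<epsilon>. finite F \<and> F \<subseteq> I1 \<and> \<epsilon> > 0 \<and>
        {g\<in>beur_space I1 pO. \<forall>i\<in>F. pO i (\<lambda>x. g x - f x) < ennreal \<epsilon>} \<subseteq> U"
    then obtain F \<epsilon> where "finite F" "F \<subseteq> I1" "\<epsilon> > 0"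
        "{g\<in>beur_space I1 pO. \<forall>i\<in>F. pO i (\<lambda>x. g x - f x) < ennreal \<epsilon>} \<subseteq> U" by blast
    from proj_cond[of I1 I2 pO pM, OF H4 this] show "\<exists>F \<epsilon>. finite F \<and> F \<subseteq> I2 \<and> \<epsilon> > 0 \<and>
        {g\<in>beur_space I1 pO. \<forall>i\<in>F. pM i (\<lambda>x. g x - f x) < ennreal \<epsilon>} \<subseteq> U" .
  qed
  have PT: "proj_topology I2 pM = proj_topology I1 pO"
    unfolding proj_topology_def B by (simp only: peq)
  show ?thesis using R B IT PT unfolding I1_def I2_def pM_def pO_def by blast
qed

end
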